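(* Let $p>1$, $N\ge m$, and fix $\varepsilon>0$. For almost all $(A,y)\in\mathbb R^{m\times N}\times\mathbb R^m$ with $\|y\|_2>\varepsilon$, the unique optimal solution $x^*$ of $\min_{x\in\mathbb R^N}\|x\|_p$ subject to $\|Ax-y\|_2\le\varepsilon$ satisfies $|\mathrm{supp}(x^* )|=N$.
   Context: $\|x\|_p:=(\sum_i|x_i|^p)^{1/p}$; $\mathrm{supp}(x)=\{i:x_i\ne0\}$. "For almost all" means outside a set of Lebesgue measure zero. *)

theory Defs
  imports "HOL-Analysis.Analysis"
begin

definition lp_norm :: "real \<Rightarrow> real ^ 'n \<Rightarrow> real" where
  "lp_norm p x = (\<Sum>i\<in>UNIV. \<bar>x $ i\<bar> powr p) powr (1 / p)"

definition supp :: "real ^ 'n \<Rightarrow> 'n set" where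
  "supp x = {i. x $ i \<noteq> 0}"

definition lp_opt :: "real \<Rightarrow> real \<Rightarrow> real ^ 'n ^ 'm \<Rightarrow> real ^ 'm \<Rightarrow> real ^ 'n \<Rightarrow> bool" where
  "lp_opt p eps A y x \<longleftrightarrow>
     norm (A *v x - y) \<le> eps \<and>
     (\<forall>z. norm (A *v z - y) \<le> eps \<longrightarrow> lp_norm p x \<le> lp_norm p z)"

end

theory Submission
  imports Defs
begin



lemma bern_strict:
  fixes p x :: real
  assumes p: "p > 1" and x: "x > -1" "x \<noteq> 0"
  shows "(1 + x) powr p > 1 + p * x"
proof -
  define \<phi> where "\<phi> t = (1 + t) powr p - 1 - p * t" for t :: real
  have der: "DERIV \<phi> t :> p * (1 + t) powr (p - 1) - p" if "t > -1" for t
    unfolding \<phi>_def using that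
    by (auto intro!: derivative_eq_intros)
  have cont: "continuous_on {a..b} \<phi>" if "a > -1" for a b
  proof -
    have "\<And>t. t \<in> {a..b} \<Longrightarrow> isCont \<phi> t"
      using der that by (meson DERIV_isCont atLeastAtMost_iff less_le_trans)
    then show ?thesis by (simp add: continuous_at_imp_continuous_on)
  qed
  have phi0: "\<phi> 0 = 0" unfolding \<phi>_def by simp
  show ?thesis
  proof (cases "x > 0")
    case True
    have "\<phi> 0 < \<phi> x"
    proof (rule DERIV_pos_imp_increasing_open[OF True])
      fix t assume t: "0 < t" "t < x"
      have "1 powr (p - 1) < (1 + t) powr (p - 1)"
        using t p by (intro powr_less_mono2) auto
      then show "\<exists>y. DERIV \<phi> t :> y \<and> y > 0"
        using der[of t] t p by (intro exI[of _ "p * (1 + t) powr (p - 1) - p"]) auto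
    qed (use cont in auto)
    then show ?thesis using phi0 unfolding \<phi>_def by simp
  next
    case False
    then have xn: "x < 0" using x by simp
    have "\<phi> x > \<phi> 0"
    proof (rule DERIV_neg_imp_decreasing_open[OF xn])
      fix t assume t: "x < t" "t < 0"
      have "(1 + t) powr (p - 1) < 1 powr (p - 1)"
        using t p x by (intro powr_less_mono2) auto
      then show "\<exists>y. DERIV \<phi> t :> y \<and> y < 0"
        using der[of t] t p x by (intro exI[of _ "p * (1 + t) powr (p - 1) - p"]) auto
    qed (use cont x in auto)
    then show ?thesis using phi0 unfolding \<phi>_def by simp
  qed
qed

lemma tangent_powr:
  fixes p a c :: real
  assumes p: "p > 1" and c: "c > 0" and a: "a \<ge> 0"
  shows "a powr p \<ge> c powr p + p * c powr (p - 1) * (a - c)"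
    and "a \<noteq> c \<Longrightarrow> a powr p > c powr p + p * c powr (p - 1) * (a - c)"
proof -
  define x where "x = a / c - 1"
  have ax: "a = c * (1 + x)" using c by (simp add: x_def field_simps)
  have key: "(1 + x) powr p \<ge> 1 + p * x \<and> (x \<noteq> 0 \<longrightarrow> (1 + x) powr p > 1 + p * x)"
  proof (cases "x = -1")
    case True then show ?thesis using p by simp
  next
    case False
    then have "x > -1" using a c by (simp add: x_def field_simps)
    then show ?thesis using bern_strict[OF p] by (cases "x = 0") (auto simp: less_imp_le)
  qed
  have eq1: "a powr p = c powr p * (1 + x) powr p"
    unfolding ax using c a ax by (subst powr_mult) (auto simp: mult_nonneg_nonneg)
  have eq2: "c powr p + p * c powr (p - 1) * (a - c) = c powr p * (1 + p * x)"
    using c by (simp add: ax powr_diff field_simps)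
  have cp: "c powr p > 0" using c by simp
  show "a powr p \<ge> c powr p + p * c powr (p - 1) * (a - c)"
    unfolding eq1 eq2 using key cp by (intro mult_left_mono) auto
  assume "a \<noteq> c"
  then have "x \<noteq> 0" using c by (auto simp: x_def field_simps)
  then show "a powr p > c powr p + p * c powr (p - 1) * (a - c)"
    unfolding eq1 eq2 using key cp by (intro mult_strict_left_mono) auto
qed

definition hp :: "real \<Rightarrow> real \<Rightarrow> real" where "hp p s = \<bar>s\<bar> powr p"

lemma hp_convex:
  fixes p a b t :: real
  assumes p: "p > 1" and t: "0 \<le> t" "t \<le> 1"
  shows "hp p ((1 - t) * a + t * b) \<le> (1 - t) * hp p a + t * hp p b"
proof -
  define c where "c = (1 - t) * \<bar>a\<bar> + t * \<bar>b\<bar>"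
  have c0: "c \<ge> 0" using t by (simp add: c_def)
  have le: "\<bar>(1 - t) * a + t * b\<bar> \<le> c"
    unfolding c_def using t by (metis abs_mult abs_of_nonneg abs_triangle_ineq diff_ge_0_iff_ge)
  have "hp p ((1 - t) * a + t * b) \<le> c powr p"
    unfolding hp_def using le p by (intro powr_mono2) auto
  also have "c powr p \<le> (1 - t) * hp p a + t * hp p b"
  proof (cases "c = 0")
    case True then show ?thesis using t by (simp add: hp_def)
  next
    case False
    then have cp: "c > 0" using c0 by simp
    have A: "\<bar>a\<bar> powr p \<ge> c powr p + p * c powr (p - 1) * (\<bar>a\<bar> - c)"
      using tangent_powr(1)[OF p cp] by simp
    have B: "\<bar>b\<bar> powr p \<ge> c powr p + p * c powr (p - 1) * (\<bar>b\<bar> - c)"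
      using tangent_powr(1)[OF p cp] by simp
    have "(1 - t) * \<bar>a\<bar> powr p + t * \<bar>b\<bar> powr p \<ge>
          (1 - t) * (c powr p + p * c powr (p - 1) * (\<bar>a\<bar> - c)) + t * (c powr p + p * c powr (p - 1) * (\<bar>b\<bar> - c))"
      using A B t by (intro add_mono mult_left_mono) auto
    also have "(1 - t) * (c powr p + p * c powr (p - 1) * (\<bar>a\<bar> - c)) + t * (c powr p + p * c powr (p - 1) * (\<bar>b\<bar> - c))
        = c powr p + p * c powr (p - 1) * ((1 - t) * \<bar>a\<bar> + t * \<bar>b\<bar> - c)"
      by (simp add: algebra_simps)
    also have "\<dots> = c powr p" by (simp add: c_def)
    finally show ?thesis by (simp add: hp_def)
  qed
  finally show ?thesis .
qed

lemma hp_strict_mid: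
  fixes p a b :: real
  assumes p: "p > 1" and ab: "a \<noteq> b"
  shows "hp p ((a + b) / 2) < (hp p a + hp p b) / 2"
proof (cases "\<bar>a\<bar> = \<bar>b\<bar>")
  case True
  then have "a = - b" "a \<noteq> 0" using ab by (auto simp: abs_eq_iff)
  then show ?thesis by (simp add: hp_def)
next
  case False
  define c where "c = (\<bar>a\<bar> + \<bar>b\<bar>) / 2"
  have cp: "c > 0" using False by (auto simp: c_def)
  have le: "\<bar>(a + b) / 2\<bar> \<le> c" unfolding c_def by simp
  have "hp p ((a + b) / 2) \<le> c powr p"
    unfolding hp_def using le p by (intro powr_mono2) auto
  also have "c powr p < (hp p a + hp p b) / 2"
  proof -
    have ne: "\<bar>a\<bar> \<noteq> c \<or> \<bar>b\<bar> \<noteq> c" using False by (auto simp: c_def)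
    have A: "\<bar>a\<bar> powr p \<ge> c powr p + p * c powr (p - 1) * (\<bar>a\<bar> - c)"
      using tangent_powr(1)[OF p cp] by simp
    have B: "\<bar>b\<bar> powr p \<ge> c powr p + p * c powr (p - 1) * (\<bar>b\<bar> - c)"
      using tangent_powr(1)[OF p cp] by simp
    have "\<bar>a\<bar> powr p + \<bar>b\<bar> powr p > (c powr p + p * c powr (p - 1) * (\<bar>a\<bar> - c)) + (c powr p + p * c powr (p - 1) * (\<bar>b\<bar> - c))"
      using ne A B tangent_powr(2)[OF p cp, of "\<bar>a\<bar>"] tangent_powr(2)[OF p cp, of "\<bar>b\<bar>"]
      by (auto intro: add_less_le_mono add_le_less_mono)
    also have "(c powr p + p * c powr (p - 1) * (\<bar>a\<bar> - c)) + (c powr p + p * c powr (p - 1) * (\<bar>b\<bar> - c)) = 2 * c powr p"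
      by (simp add: c_def algebra_simps)
    finally show ?thesis by (simp add: hp_def)
  qed
  finally show ?thesis .
qed


definition fp :: "real \<Rightarrow> real ^ 'n \<Rightarrow> real" where
  "fp p x = (\<Sum>i\<in>UNIV. hp p (x $ i))"

lemma hp_nonneg: "hp p s \<ge> 0" by (simp add: hp_def)

lemma fp_nonneg: "fp p x \<ge> 0"
  unfolding fp_def by (intro sum_nonneg) (simp add: hp_nonneg)

lemma lp_norm_fp: "lp_norm p x = fp p x powr (1 / p)"
  unfolding lp_norm_def fp_def hp_def ..

lemma lp_le_iff:
  assumes "p > 0"
  shows "lp_norm p x \<le> lp_norm p z \<longleftrightarrow> fp p x \<le> fp p z"
proof -
  have q: "1 / p > 0" using assms by simp
  show ?thesis unfolding lp_norm_fp
  proof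
    assume "fp p x powr (1 / p) \<le> fp p z powr (1 / p)"
    then show "fp p x \<le> fp p z"
      using powr_less_mono2[OF q fp_nonneg[of p z], of "fp p x"] by (meson not_le)
  next
    assume "fp p x \<le> fp p z"
    then show "fp p x powr (1 / p) \<le> fp p z powr (1 / p)"
      using q fp_nonneg[of p x] by (intro powr_mono2) auto
  qed
qed

lemma fp_convex:
  assumes p: "p > 1" and t: "0 \<le> t" "t \<le> 1"
  shows "fp p ((1 - t) *\<^sub>R x + t *\<^sub>R z) \<le> (1 - t) * fp p x + t * fp p z"
  unfolding fp_def sum_distrib_left sum.distrib[symmetric]
  by (intro sum_mono) (use hp_convex[OF p t] in simp)

lemma fp_strict_mid:
  assumes p: "p > 1" and ne: "x \<noteq> z"
  shows "fp p ((1/2) *\<^sub>R (x + z)) < (fp p x + fp p z) / 2"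
proof -
  obtain i where i: "x $ i \<noteq> z $ i" using ne by (metis vec_eq_iff)
  have "(\<Sum>k\<in>UNIV. hp p (((1/2) *\<^sub>R (x + z)) $ k)) < (\<Sum>k\<in>UNIV. (hp p (x $ k) + hp p (z $ k)) / 2)"
  proof (rule sum_strict_mono_ex1)
    show "\<forall>k\<in>UNIV. hp p (((1/2) *\<^sub>R (x + z)) $ k) \<le> (hp p (x $ k) + hp p (z $ k)) / 2"
      using hp_convex[OF p, of "1/2"] by (auto simp: field_simps)
    show "\<exists>k\<in>UNIV. hp p (((1/2) *\<^sub>R (x + z)) $ k) < (hp p (x $ k) + hp p (z $ k)) / 2"
      using hp_strict_mid[OF p i] by (intro bexI[of _ i]) (auto simp: field_simps)
  qed simp
  moreover have "(\<Sum>k\<in>UNIV. (hp p (x $ k) + hp p (z $ k)) / 2) = (fp p x + fp p z) / 2"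
    by (simp add: fp_def sum.distrib sum_divide_distrib[symmetric])
  ultimately show ?thesis unfolding fp_def by simp
qed

lemma fp_scale:
  assumes "p > 0"
  shows "fp p (s *\<^sub>R x) = \<bar>s\<bar> powr p * fp p x"
  unfolding fp_def hp_def sum_distrib_left
  by (intro sum.cong refl) (simp add: abs_mult powr_mult)

lemma fp_zero_iff:
  assumes "p > 0"
  shows "fp p x = 0 \<longleftrightarrow> x = 0"
proof
  assume "fp p x = 0"
  then have "\<forall>i\<in>UNIV. hp p (x $ i) = 0"
    unfolding fp_def by (subst sum_nonneg_eq_0_iff[symmetric]) (auto simp: hp_nonneg)
  then show "x = 0" by (auto simp: hp_def vec_eq_iff)
qed (simp add: fp_def hp_def)

lemma fp_continuous_on:
  assumes p: "p > 0" and g: "continuous_on S g"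
  shows "continuous_on S (\<lambda>u. fp p (g u))"
proof -
  have "continuous_on S (\<lambda>u. \<bar>g u $ i\<bar> powr p)" for i
    by (rule continuous_on_powr') (use p g in \<open>auto intro!: continuous_intros\<close>)
  then show ?thesis unfolding fp_def hp_def by (intro continuous_on_sum) auto
qed

lemma fp_coord_le:
  assumes "p > 0"
  shows "\<bar>x $ i\<bar> \<le> fp p x powr (1 / p)"
proof -
  have "hp p (x $ i) \<le> fp p x"
    unfolding fp_def by (rule member_le_sum) (auto simp: hp_nonneg)
  then have "(\<bar>x $ i\<bar> powr p) powr (1/p) \<le> fp p x powr (1/p)"
    unfolding hp_def using assms by (intro powr_mono2) auto
  then show ?thesis using assms by (simp add: powr_powr)
qed

lemma fp_norm_bound:
  fixes x :: "real ^ 'n"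
  assumes "p > 0"
  shows "norm x \<le> real CARD('n) * fp p x powr (1 / p)"
proof -
  have "norm x \<le> (\<Sum>i\<in>UNIV. \<bar>x $ i\<bar>)" by (rule norm_le_l1_cart)
  also have "\<dots> \<le> (\<Sum>i\<in>(UNIV::'n set). fp p x powr (1 / p))"
    by (intro sum_mono fp_coord_le assms)
  finally show ?thesis by simp
qed

lemma fp_add_axis:
  assumes "x $ j = 0"
  shows "fp p (x + t *\<^sub>R axis j 1) = fp p x + \<bar>t\<bar> powr p"
proof -
  have "fp p (x + t *\<^sub>R axis j 1) = (\<Sum>i\<in>UNIV. hp p (x $ i) + (if i = j then \<bar>t\<bar> powr p else 0))"
    unfolding fp_def using assms by (intro sum.cong refl) (auto simp: axis_def hp_def)
  then show ?thesis by (simp add: sum.distrib fp_def)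
qed



lemma negligible_borel_null:
  fixes N :: "'a::euclidean_space set"
  assumes "T \<in> sets borel" "negligible N" "T \<subseteq> N"
  shows "T \<in> null_sets lborel"
proof -
  have "negligible T" using assms negligible_subset by blast
  then have "T \<in> null_sets lebesgue" by (simp add: negligible_iff_null_sets)
  then show ?thesis using assms(1) null_sets_completion_iff[of T lborel] by simp
qed

lemma null_by_sections:
  fixes S :: "'a::euclidean_space set" and L :: "'b::euclidean_space \<Rightarrow> 'a"
  assumes S: "S \<in> sets borel" and L: "L \<in> borel_measurable borel"
    and sec: "\<And>u. \<exists>N. negligible N \<and> {w. u + L w \<in> S} \<subseteq> N"
  shows "S \<in> null_sets lborel"
proof (rule ccontr)
  assume nS: "S \<notin> null_sets lborel"
  have PS: "pair_sigma_finite (lborel :: 'b measure) (lborel :: 'a measure)"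
    by (simp add: sigma_finite_lborel pair_sigma_finite.intro)
  define h where "h w u = (indicator S (u + L w) :: ennreal)" for w u
  have hm: "case_prod h \<in> borel_measurable (lborel \<Otimes>\<^sub>M lborel)"
  proof -
    have "(\<lambda>(w, u). u + L w) \<in> (lborel :: 'b measure) \<Otimes>\<^sub>M (lborel :: 'a measure) \<rightarrow>\<^sub>M borel"
      using L by measurable
    then have "(\<lambda>x. indicator S ((\<lambda>(w, u). u + L w) x) :: ennreal) \<in> borel_measurable (lborel \<Otimes>\<^sub>M lborel)"
      using S by (intro measurable_compose[OF _ borel_measurable_indicator]) auto
    then show ?thesis unfolding h_def by (simp add: case_prod_beta')
  qed
  have secm: "{w. u + L w \<in> S} \<in> sets borel" for u
  proof -
    have "(\<lambda>w. u + L w) \<in> borel_measurable borel" using L by measurable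
    then have "(\<lambda>w. u + L w) -` S \<inter> space borel \<in> sets borel" using S by (rule measurable_sets)
    then show ?thesis by (simp add: vimage_def)
  qed
  have inner0: "(\<integral>\<^sup>+ w. h w u \<partial>lborel) = 0" for u
  proof -
    obtain N where N: "negligible N" "{w. u + L w \<in> S} \<subseteq> N" using sec by blast
    have null: "{w. u + L w \<in> S} \<in> null_sets lborel"
      using negligible_borel_null[OF secm N] .
    have "(\<integral>\<^sup>+ w. h w u \<partial>lborel) = (\<integral>\<^sup>+ w. indicator {w. u + L w \<in> S} w \<partial>lborel)"
      unfolding h_def by (intro nn_integral_cong) (auto simp: indicator_def)
    also have "\<dots> = emeasure lborel {w. u + L w \<in> S}"
      using secm by (simp add: nn_integral_indicator)
    also have "\<dots> = 0" using null by auto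
    finally show ?thesis .
  qed
  have lhs: "(\<integral>\<^sup>+ u. (\<integral>\<^sup>+ w. h w u \<partial>lborel) \<partial>lborel) = 0"
    by (simp add: inner0)
  have pos: "(\<integral>\<^sup>+ u. h w u \<partial>lborel) \<noteq> 0" for w
  proof
    assume z: "(\<integral>\<^sup>+ u. h w u \<partial>lborel) = 0"
    have Tm: "{u. u + L w \<in> S} \<in> sets borel"
    proof -
      have "(\<lambda>u. u + L w) \<in> borel_measurable borel" by measurable
      then have "(\<lambda>u. u + L w) -` S \<inter> space borel \<in> sets borel" using S by (rule measurable_sets)
      then show ?thesis by (simp add: vimage_def)
    qed
    have "(\<integral>\<^sup>+ u. h w u \<partial>lborel) = (\<integral>\<^sup>+ u. indicator {u. u + L w \<in> S} u \<partial>lborel)"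
      unfolding h_def by (intro nn_integral_cong) (auto simp: indicator_def)
    also have "\<dots> = emeasure lborel {u. u + L w \<in> S}"
      using Tm by (simp add: nn_integral_indicator)
    finally have "{u. u + L w \<in> S} \<in> null_sets lborel" using z Tm by (simp add: null_sets_def)
    from null_sets_translation[OF this, of "L w"]
    have "{x. x - L w + L w \<in> S} \<in> null_sets lborel" by simp
    then show False using nS by simp
  qed
  have gm: "(\<lambda>w. \<integral>\<^sup>+ u. h w u \<partial>lborel) \<in> borel_measurable lborel"
    using sigma_finite_measure.borel_measurable_nn_integral_fst[OF sigma_finite_lborel hm] by simp
  have "(\<integral>\<^sup>+ w. (\<integral>\<^sup>+ u. h w u \<partial>lborel) \<partial>lborel) = 0"
    using pair_sigma_finite.Fubini'[OF PS hm] lhs by simp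
  then have "AE w in lborel. (\<integral>\<^sup>+ u. h w u \<partial>lborel) = 0"
    using nn_integral_0_iff_AE[OF gm] by simp
  then have "AE w in (lborel :: 'b measure). False" using pos by simp
  from AE_E2[OF this] show False by simp
qed



lemma continuous_on_mv[continuous_intros]:
  fixes f :: "'a::topological_space \<Rightarrow> real^'n^'m"
  assumes "continuous_on S f" "continuous_on S g"
  shows "continuous_on S (\<lambda>u. f u *v g u)"
  unfolding matrix_vector_mult_def
  by (intro continuous_intros assms)

lemma continuous_on_vm[continuous_intros]:
  fixes f :: "'a::topological_space \<Rightarrow> real^'n^'m"
  assumes "continuous_on S f" "continuous_on S g"
  shows "continuous_on S (\<lambda>u. g u v* f u)"
  unfolding vector_matrix_mult_def
  by (intro continuous_intros assms)

lemma continuous_on_column[continuous_intros]: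
  fixes f :: "'a::topological_space \<Rightarrow> real^'n^'m"
  assumes "continuous_on S f"
  shows "continuous_on S (\<lambda>u. column j (f u))"
  unfolding column_def
  by (intro continuous_intros assms)

definition Kc :: "real \<Rightarrow> real \<Rightarrow> 'n \<Rightarrow> real^'n \<Rightarrow> real^'n^'m \<Rightarrow> real^'m \<Rightarrow> bool" where
  "Kc p eps j x A y \<longleftrightarrow> x $ j = 0 \<and> norm (A *v x - y) = eps \<and>
     (\<forall>z. z $ j = 0 \<longrightarrow> norm (A *v z - y) < eps \<longrightarrow> fp p x \<le> fp p z) \<and>
     column j A \<bullet> (y - A *v x) = 0"

definition Tset :: "real \<Rightarrow> real \<Rightarrow> 'n \<Rightarrow> nat \<Rightarrow> ((real^'n^'m) \<times> (real^'m)) set" where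
  "Tset p eps j K = {q. \<exists>x. x \<in> cball 0 (real K) \<and> Kc p eps j x (fst q) (snd q)}"

definition Rset :: "'m \<Rightarrow> nat \<Rightarrow> ((real^'n^'m) \<times> (real^'m)) set" where
  "Rset i K = {q. \<exists>v. v \<in> cball 0 (real K) \<and> v $ i = 1 \<and> v v* fst q = 0}"

lemma closed_Tset:
  assumes p: "p > 0"
  shows "closed (Tset p eps (j::'n::finite) K :: ((real^'n^'m::finite) \<times> (real^'m)) set)"
proof -
  define C where "C = {w :: (real^'n) \<times> ((real^'n^'m) \<times> (real^'m)). Kc p eps j (fst w) (fst (snd w)) (snd (snd w))}"
  have "C = {w. (fst w) $ j = 0} \<inter> {w. norm (fst (snd w) *v fst w - snd (snd w)) = eps} \<inter>
      {w. \<forall>z. z $ j \<noteq> 0 \<or> eps \<le> norm (fst (snd w) *v z - snd (snd w)) \<or> fp p (fst w) \<le> fp p z} \<inter>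
      {w. column j (fst (snd w)) \<bullet> (snd (snd w) - fst (snd w) *v fst w) = 0}"
    unfolding C_def Kc_def by (auto simp: not_less)
  moreover have "closed \<dots>"
  proof (intro closed_Int closed_Collect_all closed_Collect_disj)
    show "closed {w :: (real^'n) \<times> ((real^'n^'m) \<times> (real^'m)). (fst w) $ j = 0}"
      by (intro closed_Collect_eq continuous_intros)
    show "closed {w :: (real^'n) \<times> ((real^'n^'m) \<times> (real^'m)). norm (fst (snd w) *v fst w - snd (snd w)) = eps}"
      by (intro closed_Collect_eq continuous_intros)
    show "closed {w :: (real^'n) \<times> ((real^'n^'m) \<times> (real^'m)). column j (fst (snd w)) \<bullet> (snd (snd w) - fst (snd w) *v fst w) = 0}"
      by (intro closed_Collect_eq continuous_intros)
    fix z :: "real^'n"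
    show "closed {w :: (real^'n) \<times> ((real^'n^'m) \<times> (real^'m)). z $ j \<noteq> 0}"
      by (cases "z $ j = 0") auto
    show "closed {w :: (real^'n) \<times> ((real^'n^'m) \<times> (real^'m)). eps \<le> norm (fst (snd w) *v z - snd (snd w))}"
      by (intro closed_Collect_le continuous_intros)
    show "closed {w :: (real^'n) \<times> ((real^'n^'m) \<times> (real^'m)). fp p (fst w) \<le> fp p z}"
      by (intro closed_Collect_le continuous_intros fp_continuous_on p)
  qed
  ultimately have cC: "closed C" by simp
  have "Tset p eps j K = {q. \<exists>x. x \<in> cball 0 (real K) \<and> (x, q) \<in> C}"
    unfolding Tset_def C_def by auto
  then show ?thesis using closed_compact_projection[OF compact_cball cC, of 0 "real K"] by simp
qed

lemma closed_Rset: "closed (Rset (i::'m::finite) K :: ((real^'n::finite^'m) \<times> (real^'m)) set)"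
proof -
  define C where "C = {w :: (real^'m) \<times> ((real^'n^'m) \<times> (real^'m)). (fst w) $ i = 1 \<and> fst w v* fst (snd w) = 0}"
  have cC: "closed C" unfolding C_def
    by (intro closed_Collect_conj closed_Collect_eq continuous_intros)
  have "Rset i K = {q. \<exists>x. x \<in> cball 0 (real K) \<and> (x, q) \<in> C}"
    unfolding Rset_def C_def by auto
  then show ?thesis using closed_compact_projection[OF compact_cball cC, of 0 "real K"] by simp
qed



definition rowL :: "'m \<Rightarrow> real^'n \<Rightarrow> real^'n^'m" where
  "rowL i w = (\<chi> k l. if k = i then w $ l else 0)"

lemma vm_rowL: "v v* rowL i w = v $ i *\<^sub>R w"
  unfolding rowL_def vector_matrix_mult_def
  by (simp add: vec_eq_iff if_distrib[of "\<lambda>t. _ * t"] cong: if_cong)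

lemma vm_add_right: "v v* (A + B) = v v* A + v v* (B :: real^'n^'m)"
  unfolding vector_matrix_mult_def by (simp add: vec_eq_iff sum.distrib algebra_simps)

lemma Rset_section:
  fixes A :: "real^'n::finite^'m::finite" and y :: "real^'m"
  assumes card: "CARD('m) \<le> CARD('n)"
  shows "\<exists>N. negligible N \<and> {w. (A, y) + (rowL i w, 0) \<in> Rset i K} \<subseteq> N"
proof -
  define g where "g v = - (transpose A *v v)" for v :: "real^'m"
  define W0 where "W0 = {v :: real^'m. axis i 1 \<bullet> v = 0}"
  have lg: "linear g" unfolding g_def by (intro linear_compose_neg matrix_vector_mul_linear)
  have "dim (g ` W0) \<le> dim W0" by (rule dim_image_le[OF lg])
  also have "dim W0 = CARD('m) - 1"
    unfolding W0_def by (subst dim_hyperplane) (auto simp: axis_eq_0_iff)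
  finally have "dim (g ` W0) \<le> CARD('m) - 1" .
  then have "dim (g ` W0) < DIM(real^'n)"
  proof -
    have c0: "CARD('m) > 0" by simp
    have "dim (g ` W0) < CARD('n)" using c0 \<open>dim (g ` W0) \<le> CARD('m) - 1\<close> card by arith
    then show ?thesis by simp
  qed
  then have neg: "negligible ((+) (g (axis i 1)) ` (g ` W0))"
    by (intro negligible_translation negligible_lowdim)
  have "{w. (A, y) + (rowL i w, 0) \<in> Rset i K} \<subseteq> (+) (g (axis i 1)) ` (g ` W0)"
  proof
    fix w assume "w \<in> {w. (A, y) + (rowL i w, 0) \<in> Rset i K}"
    then obtain v where v: "v $ i = 1" "v v* (A + rowL i w) = 0"
      unfolding Rset_def by auto
    have "v v* (A + rowL i w) = v v* A + w"
      using v(1) by (simp add: vm_add_right vm_rowL)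
    then have w: "w = g v" using v(2) unfolding g_def
      by (simp add: eq_neg_iff_add_eq_0 add.commute)
    define v0 where "v0 = v - axis i 1"
    have "v0 \<in> W0" unfolding W0_def v0_def using v(1) by (simp add: inner_diff_right inner_axis' axis_nth)
    moreover have "w = g (axis i 1) + g v0"
      unfolding w v0_def using linear_diff[OF lg] by simp
    ultimately show "w \<in> (+) (g (axis i 1)) ` (g ` W0)" by blast
  qed
  then show ?thesis using neg by blast
qed




definition Xc :: "real \<Rightarrow> real \<Rightarrow> 'n \<Rightarrow> real^'n^'m \<Rightarrow> real^'m \<Rightarrow> real^'n \<Rightarrow> bool" where
  "Xc p eps j A y x \<longleftrightarrow> x $ j = 0 \<and> norm (A *v x - y) = eps \<and>
     (\<forall>z. z $ j = 0 \<longrightarrow> norm (A *v z - y) < eps \<longrightarrow> fp p x \<le> fp p z)"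

lemma mv_lin: "A *v (a *\<^sub>R x + b *\<^sub>R z) = a *\<^sub>R (A *v x) + b *\<^sub>R (A *v (z :: real^'n))"
  by (simp add: matrix_vector_right_distrib matrix_vector_mult_scaleR)

lemma X_unique:
  fixes A :: "real^'n^'m" and y :: "real^'m"
  assumes p: "p > 1" and e: "eps > 0"
    and x1: "Xc p eps j A y x1" and x2: "Xc p eps j A y x2"
  shows "A *v x1 = A *v x2"
proof -
  define r1 where "r1 = A *v x1 - y"
  define r2 where "r2 = A *v x2 - y"
  have n1: "norm r1 = eps" and n2: "norm r2 = eps" using x1 x2 by (auto simp: Xc_def r1_def r2_def)
  define m where "m = (1/2) *\<^sub>R (x1 + x2)"
  have mj: "m $ j = 0" using x1 x2 by (simp add: m_def Xc_def)
  have Am: "A *v m - y = (1/2) *\<^sub>R (r1 + r2)"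
  proof -
    have "r1 + r2 = (A *v x1 + A *v x2) - 2 *\<^sub>R y" by (simp add: r1_def r2_def scaleR_2 algebra_simps)
    then show ?thesis by (simp add: m_def matrix_vector_right_distrib matrix_vector_mult_scaleR scaleR_diff_right)
  qed
  have Amle: "norm (A *v m - y) \<le> eps"
  proof -
    have "norm (A *v m - y) \<le> (1/2) * (norm r1 + norm r2)"
      unfolding Am by (simp add: norm_triangle_ineq)
    then show ?thesis using n1 n2 by simp
  qed
  show ?thesis
  proof (cases "\<exists>w. w $ j = 0 \<and> norm (A *v w - y) < eps")
    case True
    then obtain w where w: "w $ j = 0" "norm (A *v w - y) < eps" by blast
    have "x1 = x2"
    proof (rule ccontr)
      assume ne: "x1 \<noteq> x2"
      define F where "F = fp p m"
      define G where "G = fp p w"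
      define D where "D = (fp p x1 + fp p x2) / 2 - F"
      have D: "D > 0" using fp_strict_mid[OF p ne] by (simp add: D_def F_def m_def)
      define t where "t = min 1 (D / (2 * (\<bar>G - F\<bar> + 1)))"
      have "D / (2 * (\<bar>G - F\<bar> + 1)) > 0" proof (intro divide_pos_pos D)
        show "0 < 2 * (\<bar>G - F\<bar> + 1)" by argo
      qed
      then have t0: "t > 0" by (simp add: t_def)
      have t1: "t \<le> 1" by (simp add: t_def)
      define z where "z = (1 - t) *\<^sub>R m + t *\<^sub>R w"
      have zj: "z $ j = 0" using mj w by (simp add: z_def)
      have Az: "A *v z - y = (1 - t) *\<^sub>R (A *v m - y) + t *\<^sub>R (A *v w - y)"
        unfolding z_def mv_lin by (simp add: algebra_simps)
      have "norm (A *v z - y) \<le> norm ((1 - t) *\<^sub>R (A *v m - y)) + norm (t *\<^sub>R (A *v w - y))"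
        unfolding Az by (rule norm_triangle_ineq)
      also have "\<dots> = (1 - t) * norm (A *v m - y) + t * norm (A *v w - y)"
        using t0 t1 by simp
      also have "\<dots> < (1 - t) * eps + t * eps"
        using Amle w(2) t0 t1 by (intro add_le_less_mono mult_left_mono mult_strict_left_mono) auto
      finally have zf: "norm (A *v z - y) < eps" by (simp add: algebra_simps)
      have f1: "fp p x1 \<le> fp p z" and f2: "fp p x2 \<le> fp p z"
        using x1 x2 zj zf by (auto simp: Xc_def)
      have fz: "fp p z \<le> (1 - t) * F + t * G"
        unfolding z_def F_def G_def using fp_convex[OF p, of t] t0 t1 by simp
      have "(fp p x1 + fp p x2) / 2 \<le> (1 - t) * F + t * G" using f1 f2 fz by argo
      then have "D \<le> t * (G - F)" by (simp add: D_def algebra_simps)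
      also have "\<dots> \<le> t * \<bar>G - F\<bar>" using t0 by (intro mult_left_mono) auto
      also have "\<dots> \<le> (D / (2 * (\<bar>G - F\<bar> + 1))) * \<bar>G - F\<bar>"
        by (intro mult_right_mono) (auto simp: t_def)
      also have "\<dots> < D"
      proof -
        have "(D / (2 * (\<bar>G - F\<bar> + 1))) * \<bar>G - F\<bar> = D * (\<bar>G - F\<bar> / (2 * (\<bar>G - F\<bar> + 1)))"
          by simp
        also have "\<dots> < D * 1"
        proof (intro mult_strict_left_mono D)
          have den: "0 < 2 * (\<bar>G - F\<bar> + 1)" by argo
          have "\<bar>G - F\<bar> < 2 * (\<bar>G - F\<bar> + 1)" by argo
          then show "\<bar>G - F\<bar> / (2 * (\<bar>G - F\<bar> + 1)) < 1" using den by (simp add: divide_less_eq)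
        qed
        finally show ?thesis by simp
      qed
      finally show False by simp
    qed
    then show ?thesis by simp
  next
    case False
    then have ge: "norm (A *v m - y) \<ge> eps" using mj by (auto simp: not_less)
    have par: "norm (r1 + r2)^2 + norm (r1 - r2)^2 = 2 * norm r1 ^ 2 + 2 * norm r2 ^ 2"
      by (simp add: power2_norm_eq_inner inner_add_left inner_add_right inner_diff_left inner_diff_right inner_commute)
    have "norm (r1 + r2) \<ge> 2 * eps" using ge unfolding Am by simp
    then have "norm (r1 + r2)^2 \<ge> (2 * eps)^2" using e by (intro power_mono) auto
    moreover have "norm (r1 + r2)^2 + norm (r1 - r2)^2 = 4 * eps^2" using par n1 n2 by simp
    ultimately have "norm (r1 + r2)^2 \<ge> 4 * eps^2" "norm (r1 + r2)^2 + norm (r1 - r2)^2 = 4 * eps^2"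
      by (simp_all add: power_mult_distrib)
    then have "norm (r1 - r2)^2 \<le> 0" by argo
    then have "r1 = r2" by simp
    then show ?thesis by (simp add: r1_def r2_def)
  qed
qed

definition colL :: "'n \<Rightarrow> real^'m \<Rightarrow> real^'n^'m" where
  "colL j v = (\<chi> i k. if k = j then v $ i else 0)"

lemma colL_mv: "x $ j = 0 \<Longrightarrow> colL j v *v x = 0"
proof -
  assume xj: "x $ j = 0"
  have "(\<Sum>k\<in>UNIV. (if k = j then v $ i else 0) * x $ k) = 0" for i
    using xj by (intro sum.neutral) auto
  then show ?thesis unfolding colL_def matrix_vector_mult_def by (simp add: vec_eq_iff)
qed

lemma column_add_colL: "column j (A + colL j v) = column j A + v"
  unfolding colL_def column_def by (simp add: vec_eq_iff)

lemma Tset_section: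
  fixes A :: "real^'n::finite^'m::finite" and y :: "real^'m"
  assumes p: "p > 1" and e: "eps > 0"
  shows "\<exists>N. negligible N \<and> {v. (A, y) + (colL j v, 0) \<in> Tset p eps j K} \<subseteq> N"
proof -
  have mem: "\<exists>x. Xc p eps j A y x \<and> (column j A + v) \<bullet> (y - A *v x) = 0"
    if "(A, y) + (colL j v, 0) \<in> Tset p eps j K" for v
  proof -
    have eq: "(A, y) + (colL j v, 0) = (A + colL j v, y)" by simp
    have "(A + colL j v, y) \<in> Tset p eps j K" using that eq by simp
    then have "\<exists>x. x \<in> cball 0 (real K) \<and> Kc p eps j x (A + colL j v) y"
      unfolding Tset_def by simp
    then obtain x where x: "Kc p eps j x (A + colL j v) y" by blast
    have xj: "x $ j = 0" using x by (simp add: Kc_def)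
    have eqz: "(A + colL j v) *v z = A *v z" if "z $ j = 0" for z
      using colL_mv[OF that] by (simp add: matrix_vector_mult_add_rdistrib)
    have K: "norm ((A + colL j v) *v x - y) = eps"
      "\<And>z. z $ j = 0 \<Longrightarrow> norm ((A + colL j v) *v z - y) < eps \<Longrightarrow> fp p x \<le> fp p z"
      "column j (A + colL j v) \<bullet> (y - (A + colL j v) *v x) = 0"
      using x unfolding Kc_def by auto
    have X: "Xc p eps j A y x"
      unfolding Xc_def
    proof (intro conjI allI impI)
      show "x $ j = 0" by (rule xj)
      show "norm (A *v x - y) = eps" using K(1) eqz[OF xj] by simp
      fix z assume z: "z $ j = 0" "norm (A *v z - y) < eps"
      then show "fp p x \<le> fp p z" using K(2)[of z] eqz[OF z(1)] by simp
    qed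
    have "(column j A + v) \<bullet> (y - A *v x) = 0"
      using K(3) eqz[OF xj] by (simp only: column_add_colL)
    then show ?thesis using X by blast
  qed
  show ?thesis
  proof (cases "\<exists>x0. Xc p eps j A y x0")
    case False
    then have "{v. (A, y) + (colL j v, 0) \<in> Tset p eps j K} = {}" using mem by blast
    then show ?thesis by (intro exI[of _ "{}"]) simp
  next
    case True
    then obtain x0 where x0: "Xc p eps j A y x0" by blast
    define r0 where "r0 = y - A *v x0"
    have "norm r0 = eps" using x0 norm_minus_commute[of y "A *v x0"] by (simp add: Xc_def r0_def)
    then have r0: "r0 \<noteq> 0" using e by auto
    have "{v. (A, y) + (colL j v, 0) \<in> Tset p eps j K} \<subseteq> {v. r0 \<bullet> v = - (column j A \<bullet> r0)}"
    proof
      fix v assume "v \<in> {v. (A, y) + (colL j v, 0) \<in> Tset p eps j K}"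
      then obtain x where x: "Xc p eps j A y x" "(column j A + v) \<bullet> (y - A *v x) = 0"
        using mem by blast
      have "A *v x = A *v x0" using X_unique[OF p e x(1) x0] .
      then show "v \<in> {v. r0 \<bullet> v = - (column j A \<bullet> r0)}"
      proof -
        have "(column j A + v) \<bullet> r0 = 0" using x(2) \<open>A *v x = A *v x0\<close> by (simp add: r0_def)
        then have "column j A \<bullet> r0 + v \<bullet> r0 = 0" by (simp only: inner_add_left)
        then show ?thesis by (simp add: inner_commute[of r0 v])
      qed
    qed
    moreover have "negligible {v. r0 \<bullet> v = - (column j A \<bullet> r0)}"
      by (rule negligible_hyperplane) (simp add: r0)
    ultimately show ?thesis by (intro exI[of _ "{v. r0 \<bullet> v = - (column j A \<bullet> r0)}"]) simp
  qed
qed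




lemma full_rank_surj:
  fixes A :: "real^'n^'m"
  assumes "\<And>v. v v* A = 0 \<Longrightarrow> v = 0"
  shows "\<exists>x. A *v x = y"
proof -
  have "\<forall>c. sum (\<lambda>i::'m. c i *s row i A) UNIV = 0 \<longrightarrow> (\<forall>i. c i = 0)"
  proof (intro allI impI)
    fix c :: "'m \<Rightarrow> real" and i :: 'm
    assume s: "sum (\<lambda>i::'m. c i *s row i A) UNIV = 0"
    have "(\<chi> i. c i) v* A = sum (\<lambda>i::'m. c i *s row i A) UNIV"
      by (simp add: vec_eq_iff sum_component mult.commute vector_matrix_mult_def row_def)
    then have "(\<chi> i. c i) = (0 :: real^'m)" using assms s by simp
    then show "c i = 0" by (simp add: vec_eq_iff)
  qed
  then have "surj (\<lambda>x. A *v x)"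
    using matrix_right_invertible_independent_rows matrix_right_invertible_surjective by blast
  then show ?thesis by (metis surjD)
qed

lemma lp_opt_fp:
  assumes "p > 0"
  shows "lp_opt p eps A y x \<longleftrightarrow> norm (A *v x - y) \<le> eps \<and> (\<forall>z. norm (A *v z - y) \<le> eps \<longrightarrow> fp p x \<le> fp p z)"
  unfolding lp_opt_def by (simp add: lp_le_iff[OF assms])

lemma exists_opt:
  fixes A :: "real^'n^'m"
  assumes p: "p > 0" and x0: "norm (A *v x0 - y) \<le> eps"
  shows "\<exists>x. lp_opt p eps A y x"
proof -
  define C where "C = {x. norm (A *v x - y) \<le> eps} \<inter> {x. fp p x \<le> fp p x0}"
  have cl: "closed C" unfolding C_def
    by (intro closed_Int closed_Collect_le continuous_intros fp_continuous_on p)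
  have bd: "bounded C"
  proof -
    have "norm x \<le> real CARD('n) * fp p x0 powr (1 / p)" if "x \<in> C" for x
    proof -
      have "norm x \<le> real CARD('n) * fp p x powr (1 / p)" by (rule fp_norm_bound[OF p])
      also have "\<dots> \<le> real CARD('n) * fp p x0 powr (1 / p)"
        using that p fp_nonneg[of p x] by (intro mult_left_mono powr_mono2) (auto simp: C_def)
      finally show ?thesis .
    qed
    then show ?thesis by (auto simp: bounded_iff)
  qed
  have ne: "C \<noteq> {}" using x0 by (auto simp: C_def)
  obtain xs where xs: "xs \<in> C" "\<forall>z\<in>C. fp p xs \<le> fp p z"
    using continuous_attains_inf[OF compact_eq_bounded_closed[THEN iffD2] ne, of "fp p"] cl bd
      fp_continuous_on[OF p continuous_on_id] by auto
  have "lp_opt p eps A y xs"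
    unfolding lp_opt_fp[OF p]
  proof (intro conjI allI impI)
    show "norm (A *v xs - y) \<le> eps" using xs(1) by (simp add: C_def)
    fix z assume z: "norm (A *v z - y) \<le> eps"
    show "fp p xs \<le> fp p z"
    proof (cases "fp p z \<le> fp p x0")
      case True then show ?thesis using xs z by (auto simp: C_def)
    next
      case False
      have "fp p xs \<le> fp p x0" using xs(2) x0 by (auto simp: C_def)
      then show ?thesis using False by simp
    qed
  qed
  then show ?thesis by blast
qed

lemma unique_opt:
  fixes A :: "real^'n^'m"
  assumes p: "p > 1" and x1: "lp_opt p eps A y x1" and x2: "lp_opt p eps A y x2"
  shows "x1 = x2"
proof (rule ccontr)
  assume ne: "x1 \<noteq> x2"
  have p0: "p > 0" using p by simp
  have f1: "norm (A *v x1 - y) \<le> eps" "\<And>z. norm (A *v z - y) \<le> eps \<Longrightarrow> fp p x1 \<le> fp p z"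
    using x1 unfolding lp_opt_fp[OF p0] by auto
  have f2: "norm (A *v x2 - y) \<le> eps" "\<And>z. norm (A *v z - y) \<le> eps \<Longrightarrow> fp p x2 \<le> fp p z"
    using x2 unfolding lp_opt_fp[OF p0] by auto
  define m where "m = (1/2) *\<^sub>R (x1 + x2)"
  have "A *v m - y = (1/2) *\<^sub>R ((A *v x1 - y) + (A *v x2 - y))"
  proof -
    have "(A *v x1 - y) + (A *v x2 - y) = (A *v x1 + A *v x2) - 2 *\<^sub>R y" by (simp add: scaleR_2 algebra_simps)
    then show ?thesis by (simp add: m_def matrix_vector_right_distrib matrix_vector_mult_scaleR scaleR_diff_right)
  qed
  then have "norm (A *v m - y) = (1/2) * norm ((A *v x1 - y) + (A *v x2 - y))"
    by (simp only: norm_scaleR)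
  also have "\<dots> \<le> (1/2) * (norm (A *v x1 - y) + norm (A *v x2 - y))"
    by (intro mult_left_mono norm_triangle_ineq) simp
  finally have "norm (A *v m - y) \<le> (1/2) * (norm (A *v x1 - y) + norm (A *v x2 - y))" .
  then have mf: "norm (A *v m - y) \<le> eps" using f1(1) f2(1) by simp
  have "fp p m < (fp p x1 + fp p x2) / 2" using fp_strict_mid[OF p ne] by (simp add: m_def)
  moreover have "fp p x1 \<le> fp p m" "fp p x2 \<le> fp p m" using f1(2)[OF mf] f2(2)[OF mf] by auto
  ultimately show False by simp
qed

lemma active_opt:
  fixes A :: "real^'n^'m"
  assumes p: "p > 1" and e: "eps > 0" and hy: "norm y > eps" and x: "lp_opt p eps A y x"
  shows "norm (A *v x - y) = eps"
proof (rule ccontr)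
  assume "norm (A *v x - y) \<noteq> eps"
  have p0: "p > 0" using p by simp
  have f: "norm (A *v x - y) \<le> eps" "\<And>z. norm (A *v z - y) \<le> eps \<Longrightarrow> fp p x \<le> fp p z"
    using x unfolding lp_opt_fp[OF p0] by auto
  define \<delta> where "\<delta> = norm (A *v x - y)"
  have d: "\<delta> < eps" "\<delta> \<ge> 0" using f(1) \<open>norm (A *v x - y) \<noteq> eps\<close> by (auto simp: \<delta>_def)
  have xn: "x \<noteq> 0" using f(1) hy by auto
  define \<theta> where "\<theta> = (eps - \<delta>) / (norm y - \<delta>)"
  have th: "\<theta> > 0" "\<theta> < 1" using d hy by (auto simp: \<theta>_def field_simps)
  have "\<theta> * (norm y - \<delta>) = eps - \<delta>" using d hy by (simp add: \<theta>_def)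
  then have th_eq: "(1 - \<theta>) * \<delta> + \<theta> * norm y = eps" by (simp add: algebra_simps)
  define z where "z = (1 - \<theta>) *\<^sub>R x"
  have "A *v z - y = (1 - \<theta>) *\<^sub>R (A *v x - y) + \<theta> *\<^sub>R (- y)"
    by (simp add: z_def matrix_vector_mult_scaleR algebra_simps)
  then have "norm (A *v z - y) \<le> norm ((1 - \<theta>) *\<^sub>R (A *v x - y)) + norm (\<theta> *\<^sub>R (- y))"
    by (simp only: norm_triangle_ineq)
  also have "\<dots> = (1 - \<theta>) * \<delta> + \<theta> * norm y"
    using th unfolding \<delta>_def by simp
  finally have "norm (A *v z - y) \<le> (1 - \<theta>) * \<delta> + \<theta> * norm y" .
  then have zf: "norm (A *v z - y) \<le> eps" using th_eq by simp
  have "fp p z = (1 - \<theta>) powr p * fp p x" using p0 th by (simp add: z_def fp_scale)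
  also have "\<dots> < 1 * fp p x"
  proof (rule mult_strict_right_mono)
    show "(1 - \<theta>) powr p < 1" using th p0 by (simp add: powr01_less_one)
    show "fp p x > 0" using fp_nonneg[of p x] fp_zero_iff[OF p0, of x] xn by linarith
  qed
  finally show False using f(2)[OF zf] by simp
qed




lemma first_order:
  fixes A :: "real^'n^'m"
  assumes p: "p > 1" and e: "eps > 0" and hy: "norm y > eps" and x: "lp_opt p eps A y x"
    and xj: "x $ j = 0" and act: "norm (A *v x - y) = eps"
  shows "column j A \<bullet> (y - A *v x) = 0"
proof (rule ccontr)
  assume cne: "column j A \<bullet> (y - A *v x) \<noteq> 0"
  have p0: "p > 0" using p by simp
  have f: "\<And>z. norm (A *v z - y) \<le> eps \<Longrightarrow> fp p x \<le> fp p z"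
    using x unfolding lp_opt_fp[OF p0] by auto
  define a where "a = column j A"
  define r where "r = y - A *v x"
  define c where "c = a \<bullet> r"
  define Y where "Y = norm y"
  define F where "F = fp p x"
  have c0: "\<bar>c\<bar> > 0" using cne by (simp add: c_def a_def r_def)
  have nr: "norm r = eps" using act norm_minus_commute[of y "A *v x"] by (simp add: r_def)
  have Y: "Y > eps" using hy by (simp add: Y_def)
  have xn: "x \<noteq> 0" using act hy by auto
  have F0: "F > 0" using fp_nonneg[of p x] fp_zero_iff[OF p0, of x] xn by (simp add: F_def)
  define \<kappa> where "\<kappa> = \<bar>c\<bar> / (2 * eps)"
  have k0: "\<kappa> > 0" using c0 e by (simp add: \<kappa>_def)
  define \<tau>1 where "\<tau>1 = \<bar>c\<bar> / (norm a ^ 2 + 1)"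
  define \<tau>2 where "\<tau>2 = 2 * eps ^ 2 / \<bar>c\<bar>"
  define \<tau>3 where "\<tau>3 = Y / \<kappa>"
  define \<tau>4 where "\<tau>4 = (\<kappa> * F / (2 * Y)) powr (1 / (p - 1))"
  define \<tau> where "\<tau> = min (min \<tau>1 \<tau>2) (min \<tau>3 \<tau>4)"
  have t1: "\<tau>1 > 0" using c0 by (simp add: \<tau>1_def add_nonneg_pos)
  have t2: "\<tau>2 > 0" using c0 e by (simp add: \<tau>2_def)
  have t3: "\<tau>3 > 0" using Y e k0 by (simp add: \<tau>3_def)
  have t4: "\<tau>4 > 0" using Y e k0 F0 by (simp add: \<tau>4_def)
  have tp: "\<tau> > 0" using t1 t2 t3 t4 by (simp add: \<tau>_def)
  have P1: "\<tau> * norm a ^ 2 \<le> \<bar>c\<bar>"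
  proof -
    have "\<tau> * norm a ^ 2 \<le> \<tau>1 * norm a ^ 2" by (intro mult_right_mono) (auto simp: \<tau>_def)
    also have "\<dots> \<le> \<tau>1 * (norm a ^ 2 + 1)" using t1 by (intro mult_left_mono) auto
    also have "\<dots> = \<bar>c\<bar>"
    proof -
      have "norm a ^ 2 + 1 > 0" by (rule add_nonneg_pos) simp_all
      then show ?thesis by (simp add: \<tau>1_def)
    qed
    finally show ?thesis .
  qed
  have P2: "\<tau> * \<bar>c\<bar> \<le> 2 * eps ^ 2"
  proof -
    have "\<tau> * \<bar>c\<bar> \<le> \<tau>2 * \<bar>c\<bar>" by (intro mult_right_mono) (auto simp: \<tau>_def)
    also have "\<dots> = 2 * eps ^ 2" using c0 by (simp add: \<tau>2_def)
    finally show ?thesis .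
  qed
  have P3: "\<kappa> * \<tau> \<le> Y"
  proof -
    have "\<kappa> * \<tau> \<le> \<kappa> * \<tau>3" using k0 by (intro mult_left_mono) (auto simp: \<tau>_def)
    also have "\<dots> = Y" using k0 by (simp add: \<tau>3_def)
    finally show ?thesis .
  qed
  have P4: "\<tau> powr (p - 1) \<le> \<kappa> * F / (2 * Y)"
  proof -
    have "\<tau> powr (p - 1) \<le> \<tau>4 powr (p - 1)"
      using tp p by (intro powr_mono2) (auto simp: \<tau>_def)
    also have "\<dots> = \<kappa> * F / (2 * Y)"
      using p k0 F0 Y e by (simp add: \<tau>4_def powr_powr)
    finally show ?thesis .
  qed
  define t where "t = (if c > 0 then \<tau> else - \<tau>)"
  have tc: "t * c = \<tau> * \<bar>c\<bar>" and tt: "t * t = \<tau> * \<tau>" and ta: "\<bar>t\<bar> = \<tau>"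
    using tp by (auto simp: t_def)
  define xt where "xt = x + t *\<^sub>R axis j 1"
  have Axt: "A *v xt - y = t *\<^sub>R a - r"
    by (simp add: xt_def a_def r_def matrix_vector_right_distrib matrix_vector_mult_scaleR matrix_vector_mult_basis)
  have nsq: "norm (A *v xt - y) ^ 2 = eps ^ 2 - 2 * (\<tau> * \<bar>c\<bar>) + \<tau> * \<tau> * norm a ^ 2"
  proof -
    have "norm (t *\<^sub>R a - r) ^ 2 = (t * t) * (a \<bullet> a) - 2 * (t * c) + r \<bullet> r"
      by (simp add: power2_norm_eq_inner inner_diff_left inner_diff_right c_def inner_commute[of r a] algebra_simps)
    also have "\<dots> = eps ^ 2 - 2 * (\<tau> * \<bar>c\<bar>) + \<tau> * \<tau> * norm a ^ 2"
      using nr tc tt by (simp add: power2_norm_eq_inner[symmetric])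
    finally show ?thesis unfolding Axt .
  qed
  have "\<tau> * \<tau> * norm a ^ 2 \<le> \<tau> * \<bar>c\<bar>"
    using P1 tp by (simp add: mult.assoc mult_left_mono)
  then have nsq2: "norm (A *v xt - y) ^ 2 \<le> eps ^ 2 - \<tau> * \<bar>c\<bar>" using nsq by argo
  have kt: "\<tau> * \<bar>c\<bar> = 2 * eps * (\<kappa> * \<tau>)" using e by (simp add: \<kappa>_def)
  have ekt: "eps - \<kappa> * \<tau> \<ge> 0"
  proof -
    have "(\<kappa> * \<tau>) * (2 * eps) \<le> eps * (2 * eps)"
    proof -
      have "(\<kappa> * \<tau>) * (2 * eps) = \<tau> * \<bar>c\<bar>" using kt by (simp only: mult.commute)
      also have "\<dots> \<le> 2 * eps ^ 2" by (rule P2)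
      also have "\<dots> = eps * (2 * eps)" by (simp add: power2_eq_square)
      finally show ?thesis .
    qed
    moreover have "0 < 2 * eps" using e by simp
    ultimately have "\<kappa> * \<tau> \<le> eps" by (rule mult_right_le_imp_le)
    then show ?thesis by simp
  qed
  have sq: "(eps - \<kappa> * \<tau>) ^ 2 = eps ^ 2 + (\<kappa> * \<tau>) ^ 2 - 2 * eps * (\<kappa> * \<tau>)"
    by (rule power2_diff)
  have "norm (A *v xt - y) ^ 2 \<le> (eps - \<kappa> * \<tau>) ^ 2"
    using nsq2 kt sq zero_le_power2[of "\<kappa> * \<tau>"] by argo
  then have nxt: "norm (A *v xt - y) \<le> eps - \<kappa> * \<tau>"
    using ekt by (rule power2_le_imp_le)
  define \<theta> where "\<theta> = \<kappa> * \<tau> / Y"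
  have th0: "\<theta> > 0" using k0 tp Y e by (simp add: \<theta>_def)
  have th1: "\<theta> \<le> 1" using P3 Y e by (simp add: \<theta>_def)
  have thY: "\<theta> * Y = \<kappa> * \<tau>" using Y e by (simp add: \<theta>_def)
  define z where "z = (1 - \<theta>) *\<^sub>R xt"
  have "A *v z - y = (1 - \<theta>) *\<^sub>R (A *v xt - y) + \<theta> *\<^sub>R (- y)"
    by (simp add: z_def matrix_vector_mult_scaleR algebra_simps)
  then have "norm (A *v z - y) \<le> norm ((1 - \<theta>) *\<^sub>R (A *v xt - y)) + norm (\<theta> *\<^sub>R (- y))"
    by (simp only: norm_triangle_ineq)
  also have "\<dots> = (1 - \<theta>) * norm (A *v xt - y) + \<theta> * Y"
    using th0 th1 by (simp add: Y_def)
  also have "\<dots> \<le> (1 - \<theta>) * (eps - \<kappa> * \<tau>) + \<theta> * Y"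
    using th1 nxt by (intro add_right_mono mult_left_mono) auto
  also have "\<dots> \<le> (eps - \<kappa> * \<tau>) + \<kappa> * \<tau>"
  proof -
    have "(1 - \<theta>) * (eps - \<kappa> * \<tau>) \<le> 1 * (eps - \<kappa> * \<tau>)"
      using ekt th0 by (intro mult_right_mono) auto
    then show ?thesis using thY by simp
  qed
  finally have zf: "norm (A *v z - y) \<le> eps" by simp
  have fxt: "fp p xt = F + \<tau> powr p"
    unfolding xt_def F_def using fp_add_axis[OF xj, of p t] ta by simp
  have fz: "fp p z = (1 - \<theta>) powr p * (F + \<tau> powr p)"
    unfolding z_def using fp_scale[OF p0, of "1 - \<theta>" xt] th1 fxt by simp
  have pw: "(1 - \<theta>) powr p \<le> 1 - \<theta>"
  proof (cases "\<theta> = 1")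
    case True then show ?thesis by simp
  next
    case False then show ?thesis using th0 th1 p by (intro powr_le_one_le) auto
  qed
  have tpow: "\<tau> powr p = \<tau> * \<tau> powr (p - 1)"
  proof -
    have "\<tau> powr p = \<tau> powr (1 + (p - 1))" by simp
    also have "\<dots> = \<tau> powr 1 * \<tau> powr (p - 1)" by (rule powr_add)
    also have "\<dots> = \<tau> * \<tau> powr (p - 1)" using tp by simp
    finally show ?thesis .
  qed
  have "\<tau> powr p \<le> \<tau> * (\<kappa> * F / (2 * Y))"
    unfolding tpow using P4 tp by (intro mult_left_mono) auto
  also have "\<dots> = \<theta> * F / 2" by (simp add: \<theta>_def mult_ac)
  finally have tpF: "\<tau> powr p \<le> \<theta> * F / 2" .
  have "fp p z \<le> (1 - \<theta>) * (F + \<tau> powr p)"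
    unfolding fz using pw F0 by (intro mult_right_mono) auto
  also have "\<dots> \<le> F + \<tau> powr p - \<theta> * F"
  proof -
    have "\<theta> * \<tau> powr p \<ge> 0" using th0 by simp
    then show ?thesis by (simp add: algebra_simps)
  qed
  also have "\<dots> < F"
  proof -
    have "\<theta> * F > 0" using th0 F0 by simp
    then show ?thesis using tpF by argo
  qed
  finally have "fp p z < fp p x" by (simp add: F_def)
  then show False using f[OF zf] by simp
qed



lemma vm_scaleR: "(c *\<^sub>R v) v* A = c *\<^sub>R (v v* (A :: real^'n^'m))"
  unfolding vector_matrix_mult_def by (simp add: vec_eq_iff sum_distrib_left mult.assoc)

lemma good:
  fixes A :: "real^'n^'m" and y :: "real^'m"
  assumes p: "p > 1" and e: "eps > 0" and hy: "norm y > eps"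
    and hR: "\<And>i K. (A, y) \<notin> Rset i K" and hT: "\<And>j K. (A, y) \<notin> Tset p eps j K"
  shows "(\<exists>!x. lp_opt p eps A y x) \<and> (\<forall>x. lp_opt p eps A y x \<longrightarrow> card (supp x) = CARD('n))"
proof -
  have p0: "p > 0" using p by simp
  have rank: "v = 0" if v: "v v* A = 0" for v :: "real^'m"
  proof (rule ccontr)
    assume "v \<noteq> 0"
    then obtain i where i: "v $ i \<noteq> 0" by (metis vec_eq_iff zero_index)
    define v' where "v' = (1 / v $ i) *\<^sub>R v"
    have v'i: "v' $ i = 1" using i by (simp add: v'_def)
    have v'A: "v' v* A = 0" using v by (simp add: v'_def vm_scaleR)
    have "norm v' \<le> real (nat \<lceil>norm v'\<rceil>)" by (rule real_nat_ceiling_ge)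
    then have "v' \<in> cball 0 (real (nat \<lceil>norm v'\<rceil>))" by (simp only: mem_cball_0)
    then have "(A, y) \<in> Rset i (nat \<lceil>norm v'\<rceil>)"
      unfolding Rset_def using v'i v'A by (intro CollectI exI[of _ v']) simp
    then show False using hR by blast
  qed
  obtain x0 where x0: "A *v x0 = y" using full_rank_surj[of A y] rank by blast
  have "norm (A *v x0 - y) \<le> eps" using x0 e by simp
  then obtain xs where xs: "lp_opt p eps A y xs" using exists_opt[OF p0] by blast
  have uniq: "\<exists>!x. lp_opt p eps A y x"
    using xs unique_opt[OF p] by blast
  have full: "card (supp x) = CARD('n)" if x: "lp_opt p eps A y x" for x
  proof -
    have nz: "x $ j \<noteq> 0" for j
    proof
      assume xj: "x $ j = 0"
      have act: "norm (A *v x - y) = eps" by (rule active_opt[OF p e hy x])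
      have fo: "column j A \<bullet> (y - A *v x) = 0" by (rule first_order[OF p e hy x xj act])
      have f: "\<And>z. norm (A *v z - y) \<le> eps \<Longrightarrow> fp p x \<le> fp p z"
        using x unfolding lp_opt_fp[OF p0] by auto
      have "Kc p eps j x A y"
        unfolding Kc_def using xj act fo f by auto
      moreover have "norm x \<le> real (nat \<lceil>norm x\<rceil>)" by (rule real_nat_ceiling_ge)
      then have "x \<in> cball 0 (real (nat \<lceil>norm x\<rceil>))" by (simp only: mem_cball_0)
      ultimately have "(A, y) \<in> Tset p eps j (nat \<lceil>norm x\<rceil>)"
        unfolding Tset_def by (intro CollectI exI[of _ x]) simp
      then show False using hT by blast
    qed
    then have "supp x = UNIV" by (auto simp: supp_def)
    then show ?thesis by simp
  qed
  show ?thesis using uniq full by blast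
qed

lemma cont_rowL: "continuous_on UNIV (rowL i :: real^'n \<Rightarrow> real^'n^'m)"
  unfolding rowL_def
proof (intro continuous_on_vec_lambda)
  fix k :: 'm and l :: 'n
  show "continuous_on UNIV (\<lambda>w :: real^'n. if k = i then w $ l else 0)"
    by (cases "k = i") (auto intro: continuous_intros)
qed

lemma cont_colL: "continuous_on UNIV (colL j :: real^'m \<Rightarrow> real^'n^'m)"
  unfolding colL_def
proof (intro continuous_on_vec_lambda)
  fix k :: 'm and l :: 'n
  show "continuous_on UNIV (\<lambda>w :: real^'m. if l = j then w $ k else 0)"
    by (cases "l = j") (auto intro: continuous_intros)
qed

lemma Rset_null:
  assumes card: "CARD('m::finite) \<le> CARD('n::finite)"
  shows "(Rset i K :: ((real^'n^'m) \<times> (real^'m)) set) \<in> null_sets lborel"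
proof (rule null_by_sections[where L = "\<lambda>w. (rowL i w, 0 :: real^'m)"])
  show "(Rset i K :: ((real^'n^'m) \<times> (real^'m)) set) \<in> sets borel"
    by (rule borel_closed[OF closed_Rset])
  show "(\<lambda>w. (rowL i w, 0 :: real^'m)) \<in> borel_measurable borel"
    by (intro borel_measurable_continuous_onI continuous_on_Pair cont_rowL continuous_on_const)
  fix u :: "(real^'n^'m) \<times> (real^'m)"
  obtain A y where u: "u = (A, y)" by (cases u)
  show "\<exists>N. negligible N \<and> {w. u + (rowL i w, 0 :: real^'m) \<in> Rset i K} \<subseteq> N"
    unfolding u by (rule Rset_section[OF card])
qed

lemma Tset_null:
  assumes p: "p > 1" and e: "eps > 0"
  shows "(Tset p eps j K :: ((real^'n::finite^'m::finite) \<times> (real^'m)) set) \<in> null_sets lborel"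
proof (rule null_by_sections[where L = "\<lambda>v. (colL j v, 0 :: real^'m)"])
  show "(Tset p eps j K :: ((real^'n^'m) \<times> (real^'m)) set) \<in> sets borel"
    by (rule borel_closed[OF closed_Tset]) (use p in simp)
  show "(\<lambda>v. (colL j v, 0 :: real^'m)) \<in> borel_measurable borel"
    by (intro borel_measurable_continuous_onI continuous_on_Pair cont_colL continuous_on_const)
  fix u :: "(real^'n^'m) \<times> (real^'m)"
  obtain A y where u: "u = (A, y)" by (cases u)
  show "\<exists>N. negligible N \<and> {v. u + (colL j v, 0 :: real^'m) \<in> Tset p eps j K} \<subseteq> N"
    unfolding u by (rule Tset_section[OF p e])
qed

theorem theorem4p4:
  fixes p eps :: real
  assumes "p > 1" and "CARD('n::finite) \<ge> CARD('m::finite)" and "eps > 0"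
  shows "AE Ay in (lborel :: ((real ^ 'n ^ 'm) \<times> (real ^ 'm)) measure).
           norm (snd Ay) > eps \<longrightarrow>
             (\<exists>!x. lp_opt p eps (fst Ay) (snd Ay) x) \<and>
             (\<forall>x. lp_opt p eps (fst Ay) (snd Ay) x \<longrightarrow> card (supp x) = CARD('n))"
proof -
  have R: "AE q in (lborel :: ((real ^ 'n ^ 'm) \<times> (real ^ 'm)) measure). \<forall>i\<in>UNIV. \<forall>K. q \<notin> Rset i K"
  proof (rule AE_finite_allI)
    fix i :: 'm
    show "AE q in (lborel :: ((real ^ 'n ^ 'm) \<times> (real ^ 'm)) measure). \<forall>K. q \<notin> Rset i K"
      unfolding AE_all_countable
      using Rset_null[OF assms(2)] by (intro allI AE_not_in) blast
  qed simp
  have T: "AE q in (lborel :: ((real ^ 'n ^ 'm) \<times> (real ^ 'm)) measure). \<forall>j\<in>UNIV. \<forall>K. q \<notin> Tset p eps j K"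
  proof (rule AE_finite_allI)
    fix j :: 'n
    show "AE q in (lborel :: ((real ^ 'n ^ 'm) \<times> (real ^ 'm)) measure). \<forall>K. q \<notin> Tset p eps j K"
      unfolding AE_all_countable
      using Tset_null[OF assms(1) assms(3)] by (intro allI AE_not_in) blast
  qed simp
  show ?thesis
    using R T
  proof eventually_elim
    case (elim q)
    obtain A y where q: "q = (A, y)" by (cases q)
    show ?case
      unfolding q fst_conv snd_conv
    proof
      assume "norm y > eps"
      then show "(\<exists>!x. lp_opt p eps A y x) \<and> (\<forall>x. lp_opt p eps A y x \<longrightarrow> card (supp x) = CARD('n))"
        using good[OF assms(1) assms(3)] elim unfolding q by blast
    qed
  qed
qed


end
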